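(* Let $p$ be an odd prime and $M$ the sub-add move matrix. Then every directed cycle in $\Gamma_{M,\,p}$ has length $1$, $s$ or $k$ (where $s$ and $k$ need not be distinct).
   Context: The sub-add move matrix is $M=\begin{pmatrix}1&-1\\1&1\end{pmatrix}$. For $n\in\mathbb N$, $\Gamma_{M,\,n}$ is the directed graph with vertex set $\mathbb Z_n^2$ and arcs $((a,b),(a-b,a+b))$ (mod $n$; loops allowed). A directed cycle is a cycle in the underlying undirected graph such that in the induced directed subgraph every vertex has in- and out-degree $1$; a loop is a directed $1$-cycle, a pair of opposite arcs a directed $2$-cycle. Let $t$ be the multiplicative order of $-4$ in $GF(p)$ and $k=4t$ (which is the $\mathbb Z_p$-order of $M$, i.e. the least positive $k$ with $M^k\equiv I \bmod p$). Let $i\in GF(p^2)$ satisfy $i^2=-1$, the choice of square root of $-1$ being made so that ${\rm ord}(1-i)\le{\rm ord}(1+i)$ (multiplicative orders in $GF(p^2)$), and let $s={\rm ord}(1-i)$. *)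

theory Defs
  imports "HOL-Number_Theory.Number_Theory" "HOL-Library.Cardinality"
begin

definition zn2_verts :: "nat \<Rightarrow> (int \<times> int) set" where
  "zn2_verts n = {0..<int n} \<times> {0..<int n}"

text \<open>Arcs of Gamma_{M,n} for the sub-add matrix M = [[1,-1],[1,1]]:
  (a,b) -> (a-b, a+b) mod n.\<close>
definition subadd_arc :: "nat \<Rightarrow> int \<times> int \<Rightarrow> int \<times> int \<Rightarrow> bool" where
  "subadd_arc n v w \<longleftrightarrow> w = ((fst v - snd v) mod int n, (fst v + snd v) mod int n)"

text \<open>A directed cycle of length L = length cs in the digraph (V,E):
  L distinct vertices v_0,...,v_{L-1} with arcs v_j -> v_{(j+1) mod L}
  (L = 1: a loop; L = 2: a pair of opposite arcs).\<close>
definition directed_cycle ::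
  "'v set \<Rightarrow> ('v \<Rightarrow> 'v \<Rightarrow> bool) \<Rightarrow> 'v list \<Rightarrow> bool" where
  "directed_cycle V E cs \<longleftrightarrow> cs \<noteq> [] \<and> distinct cs \<and> set cs \<subseteq> V \<and>
     (\<forall>j < length cs. E (cs ! j) (cs ! ((j + 1) mod length cs)))"

text \<open>Multiplicative order of an element of a monoid (0 if none).\<close>
definition mult_ord :: "'a::monoid_mult \<Rightarrow> nat" where
  "mult_ord x = (LEAST n. 0 < n \<and> x ^ n = 1)"

definition ord_minus4 :: "nat \<Rightarrow> nat" where
  "ord_minus4 p = (LEAST n. 0 < n \<and> [(-4::int) ^ n = 1] (mod int p))"

end

theory Submission
  imports Defs
begin

lemma char_is_p:
  assumes "prime p" "CARD('a::{field,finite}) = p ^ 2"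
  shows "CHAR('a) = p"
proof -
  have pos: "CHAR('a) > 0" by (rule finite_imp_CHAR_pos) simp
  have pr: "prime CHAR('a)" by (rule prime_CHAR_semidom[OF pos])
  have "CHAR('a) dvd p ^ 2" using CHAR_dvd_CARD[where 'a='a] assms(2) by simp
  then have "CHAR('a) dvd p" using pr prime_dvd_power by blast
  then show ?thesis using pr assms(1) by (metis primes_dvd_imp_eq)
qed

lemma ord_exists:
  fixes x :: "'a::{field,finite}"
  assumes "x \<noteq> 0"
  shows "\<exists>n>0. x ^ n = 1"
proof -
  have "\<not> inj (\<lambda>n::nat. x ^ n)"
  proof
    assume "inj (\<lambda>n::nat. x ^ n)"
    then have "infinite (range (\<lambda>n::nat. x ^ n))"
      using finite_imageD by blast
    then show False by simp
  qed
  then obtain a b :: nat where ab: "x ^ a = x ^ b" "a \<noteq> b" unfolding inj_def by blast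
  { fix a b :: nat assume h: "x ^ a = x ^ b" "a < b"
    then have "x ^ a * x ^ (b - a) = x ^ a * 1"
      by (metis mult_1_right power_add le_add_diff_inverse less_imp_le)
    then have "x ^ (b - a) = 1" using assms by simp
    then have "\<exists>n>0. x ^ n = 1" using h by (intro exI[of _ "b-a"]) auto }
  then show ?thesis using ab by (metis linorder_neqE_nat)
qed

lemma ord_props:
  fixes x :: "'a::{field,finite}"
  assumes "x \<noteq> 0"
  shows "mult_ord x > 0" "x ^ mult_ord x = 1" "x ^ n = 1 \<longleftrightarrow> mult_ord x dvd n"
proof -
  have ex: "\<exists>n. 0 < n \<and> x ^ n = 1" using ord_exists[OF assms] by blast
  have L: "0 < mult_ord x \<and> x ^ mult_ord x = 1"
    unfolding mult_ord_def by (rule LeastI_ex[OF ex])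
  then show "mult_ord x > 0" "x ^ mult_ord x = 1" by auto
  show "x ^ n = 1 \<longleftrightarrow> mult_ord x dvd n"
  proof
    assume h: "x ^ n = 1"
    define r where "r = n mod mult_ord x"
    have "n = mult_ord x * (n div mult_ord x) + r" unfolding r_def by simp
    then have "x ^ n = (x ^ mult_ord x) ^ (n div mult_ord x) * x ^ r"
      by (metis power_add power_mult)
    then have xr: "x ^ r = 1" using h L by simp
    have "r < mult_ord x" unfolding r_def using L by simp
    then have "\<not> (0 < r \<and> x ^ r = 1)" unfolding mult_ord_def
      by (rule not_less_Least)
    then have "r = 0" using xr by simp
    then show "mult_ord x dvd n" unfolding r_def by auto
  next
    assume "mult_ord x dvd n"
    then obtain q where "n = mult_ord x * q" by auto
    then show "x ^ n = 1" using L by (simp add: power_mult)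
  qed
qed

lemma least_is:
  fixes Q :: "nat \<Rightarrow> bool"
  assumes "\<And>n. Q n \<longleftrightarrow> X dvd n" "X > 0" "Q L" "L > 0" "\<And>j. 0 < j \<Longrightarrow> j < L \<Longrightarrow> \<not> Q j"
  shows "L = X"
proof -
  have "X dvd L" using assms by auto
  then have "X \<le> L" using assms by (simp add: dvd_imp_le)
  moreover have "\<not> X < L" using assms(5)[of X] assms(1)[of X] assms(2) by auto
  ultimately show ?thesis by simp
qed


lemma alg_mul1:
  fixes i A B :: "'a::field"
  assumes ii: "i * i = -1"
  shows "(1+i)*(A+B*i) = (A-B) + (A+B)*i"
proof -
  have "(1+i)*(A+B*i) = A + B*i + A*i + B*(i*i)" by (simp add: algebra_simps)
  then show ?thesis using ii by (simp add: algebra_simps)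
qed

lemma alg_mul2:
  fixes i A B :: "'a::field"
  assumes ii: "i * i = -1"
  shows "(1-i)*(A-B*i) = (A-B) - (A+B)*i"
proof -
  have "(1-i)*(A-B*i) = A - B*i - A*i + B*(i*i)" by (simp add: algebra_simps)
  then show ?thesis using ii by (simp add: algebra_simps)
qed

lemma alg_sq:
  fixes i :: "'a::field"
  assumes ii: "i * i = -1"
  shows "(1 + i)^2 = 2 * i" "(1 - i)^2 = -(2 * i)" "(2*i)^2 = -4"
proof -
  have "(1 + i) * (1 + i) = 1 + 2*i + i*i" by (simp add: algebra_simps)
  then show "(1 + i)^2 = 2 * i" using ii by (simp add: power2_eq_square)
  have "(1 - i) * (1 - i) = 1 - 2*i + i*i" by (simp add: algebra_simps)
  then show "(1 - i)^2 = -(2 * i)" using ii by (simp add: power2_eq_square)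
  have "(2*i) * (2*i) = 4*(i*i)" by (simp add: algebra_simps)
  then show "(2*i)^2 = -4" using ii by (simp add: power2_eq_square)
qed

lemma alg_inj:
  fixes A B C D i :: "'a::field"
  assumes e1: "A + B*i = C + D*i" and e2: "A - B*i = C - D*i"
  shows "2*A = 2*C" "(2*i)*B = (2*i)*D"
proof -
  have "(A + B*i) + (A - B*i) = (C + D*i) + (C - D*i)" using e1 e2 by simp
  then show "2 * A = 2 * C" by (simp add: algebra_simps mult_2)
  have "(A + B*i) - (A - B*i) = (C + D*i) - (C - D*i)" using e1 e2 by simp
  then show "(2 * i) * B = (2 * i) * D" by (simp add: algebra_simps mult_2)
qed

theorem proposition7p1:
  fixes p :: nat and i :: "'a::{field,finite}" and cs :: "(int \<times> int) list"
  assumes "prime p" and "odd p"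
    and "CARD('a) = p ^ 2"
    and "i ^ 2 = -1"
    and "mult_ord (1 - i) \<le> mult_ord (1 + i)"
    and "directed_cycle (zn2_verts p) (subadd_arc p) cs"
  shows "length cs \<in> {1, mult_ord (1 - i), 4 * ord_minus4 p}"
proof -
  have charp: "CHAR('a) = p" by (rule char_is_p) (use assms in auto)
  have ofint0: "\<And>n. (of_int n :: 'a) = 0 \<longleftrightarrow> int p dvd n"
    using of_int_eq_0_iff_char_dvd[where 'a='a] charp by simp
  have ofinteq: "\<And>x y. (of_int x :: 'a) = of_int y \<longleftrightarrow> [x = y] (mod int p)"
    using of_int_eq_iff_cong_CHAR[where 'a='a] charp by simp
  have p3: "p \<ge> 3" using assms(1,2) prime_ge_2_nat[of p] by (cases "p = 2") auto
  have two: "(2::'a) \<noteq> 0"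
  proof
    assume "(2::'a) = 0"
    then have "(of_int 2::'a) = 0" by simp
    then have "int p dvd 2" using ofint0 by blast
    then have "int p \<le> 2" by (rule zdvd_imp_le) simp
    then show False using p3 by simp
  qed
  have ii: "i * i = -1" using assms(4) by (simp add: power2_eq_square)
  have m4: "(-4::'a) \<noteq> 0"
  proof
    assume "(-4::'a) = 0"
    then have "(4::'a) = 0" by simp
    moreover have "(2::'a) * 2 = 4" by simp
    ultimately have "(2::'a) * 2 = 0" by simp
    then show False using two by (simp only: mult_eq_0_iff) simp
  qed
  define \<alpha> where "\<alpha> = 1 + i"
  define \<beta> where "\<beta> = 1 - i"
  have a2: "\<alpha>^2 = 2*i" unfolding \<alpha>_def using alg_sq[OF ii] by simp
  have b2: "\<beta>^2 = -(2*i)" unfolding \<beta>_def using alg_sq[OF ii] by simp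
  have i2: "(2*i)^2 = -4" using alg_sq[OF ii] by simp
  have a4: "\<alpha>^4 = -4"
  proof - have "\<alpha>^4 = (\<alpha>^2)^2" by (simp flip: power_mult) then show ?thesis using a2 i2 by simp qed
  have b4: "\<beta>^4 = -4"
  proof - have "\<beta>^4 = (\<beta>^2)^2" by (simp flip: power_mult) then show ?thesis using b2 i2 by simp qed
  have a0: "\<alpha> \<noteq> 0" using a4 m4 by auto
  have b0: "\<beta> \<noteq> 0" using b4 m4 by auto
  define t where "t = mult_ord (-4::'a)"
  have t_eq: "ord_minus4 p = t"
  proof -
    have "[(-4::int)^n = 1] (mod int p) \<longleftrightarrow> (-4::'a)^n = 1" for n
    proof -
      have "(of_int ((-4::int)^n)::'a) = (-4)^n" by simp
      then show ?thesis using ofinteq[of "(-4)^n" 1] by simp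
    qed
    then show ?thesis unfolding ord_minus4_def t_def mult_ord_def by simp
  qed
  note tp = ord_props[OF m4, folded t_def]
  define oa where "oa = mult_ord \<alpha>"
  define ob where "ob = mult_ord \<beta>"
  note oap = ord_props[OF a0, folded oa_def]
  note obp = ord_props[OF b0, folded ob_def]
  have oa_dvd: "oa dvd 4*t"
    using oap(3)[of "4*t"] a4 tp(2) by (simp add: power_mult)
  have ob_dvd: "ob dvd 4*t"
    using obp(3)[of "4*t"] b4 tp(2) by (simp add: power_mult)
  have t_oa: "t dvd oa"
  proof -
    have "(-4::'a)^oa = (\<alpha>^4)^oa" using a4 by simp
    also have "\<dots> = (\<alpha>^oa)^4" by (simp flip: power_mult add: mult.commute)
    also have "\<dots> = 1" using oap(2) by simp
    finally have "(-4::'a)^oa = 1" .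
    then show ?thesis using tp(3) by simp
  qed
  have t_ob: "t dvd ob"
  proof -
    have "(-4::'a)^ob = (\<beta>^4)^ob" using b4 by simp
    also have "\<dots> = (\<beta>^ob)^4" by (simp flip: power_mult add: mult.commute)
    also have "\<dots> = 1" using obp(2) by simp
    finally have "(-4::'a)^ob = 1" .
    then show ?thesis using tp(3) by simp
  qed
  have notboth: "\<not> (oa dvd 2*t \<and> ob dvd 2*t)"
  proof
    assume h: "oa dvd 2*t \<and> ob dvd 2*t"
    have A: "(2*i)^t = 1" using h oap(3)[of "2*t"] a2 by (simp add: power_mult)
    have B: "(-(2*i))^t = 1" using h obp(3)[of "2*t"] b2 by (simp add: power_mult)
    have "even t"
    proof (rule ccontr)
      assume "odd t"
      then have "(-(2*i))^t = - ((2*i)^t)" by simp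
      then have "(1::'a) = -1" using A B by simp
      then have "(2::'a) = 0" by (metis add.right_inverse one_add_one)
      then show False using two by simp
    qed
    then obtain m where tm: "t = 2*m" by blast
    have "(-4::'a)^m = 1" unfolding i2[symmetric] power_mult[symmetric] using A by (simp only: tm)
    then have "t dvd m" using tp(3) by simp
    moreover have "m > 0" "m < t" using tp(1) tm by auto
    ultimately show False using dvd_imp_le by fastforce
  qed
  have divs: "\<And>q. t dvd q \<Longrightarrow> q dvd 4*t \<Longrightarrow> q dvd 2*t \<or> q = 4*t"
  proof -
    fix q assume h1: "t dvd q" and h2: "q dvd 4*t"
    then obtain e where e: "q = t * e" by blast
    have "t * e dvd t * 4" using h2 e by (simp add: mult.commute)
    then have "e dvd 4" using tp(1) by simp
    then have "e \<le> 4" "e > 0" by (auto intro: dvd_imp_le Nat.gr0I)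
    then have "e = 1 \<or> e = 2 \<or> e = 3 \<or> e = 4" by auto
    moreover have "e \<noteq> 3" using \<open>e dvd 4\<close> by auto
    ultimately show "q dvd 2*t \<or> q = 4*t" using e by auto
  qed
  have sle: "ob \<le> oa" using assms(5) unfolding oa_def ob_def \<alpha>_def \<beta>_def .
  have oa4: "oa = 4*t"
  proof (rule ccontr)
    assume ne: "oa \<noteq> 4*t"
    then have "oa dvd 2*t" using divs t_oa oa_dvd by blast
    then have "\<not> ob dvd 2*t" using notboth by blast
    then have "ob = 4*t" using divs t_ob ob_dvd by blast
    moreover have "oa \<le> 2*t" using \<open>oa dvd 2*t\<close> tp(1) by (simp add: dvd_imp_le)
    ultimately show False using sle tp(1) by simp
  qed
  define L where "L = length cs"
  have cyc: "cs \<noteq> []" "distinct cs" "set cs \<subseteq> zn2_verts p"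
    "\<And>j. j < L \<Longrightarrow> cs ! ((j + 1) mod L) = ((fst (cs!j) - snd (cs!j)) mod int p, (fst (cs!j) + snd (cs!j)) mod int p)"
    using assms(6) unfolding directed_cycle_def subadd_arc_def L_def by auto
  have L0: "L > 0" using cyc(1) L_def by simp
  define \<phi> where "\<phi> = (\<lambda>v::int\<times>int. (of_int (fst v)::'a) + of_int (snd v) * i)"
  define \<psi> where "\<psi> = (\<lambda>v::int\<times>int. (of_int (fst v)::'a) - of_int (snd v) * i)"
  have ofmod: "\<And>x. (of_int (x mod int p)::'a) = of_int x"
    using ofinteq by (simp add: cong_def)
  have phistep: "\<And>v. \<phi> ((fst v - snd v) mod int p, (fst v + snd v) mod int p) = \<alpha> * \<phi> v"
    unfolding \<phi>_def \<alpha>_def fst_conv snd_conv ofmod of_int_diff of_int_add using alg_mul1[OF ii] by simp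
  have psistep: "\<And>v. \<psi> ((fst v - snd v) mod int p, (fst v + snd v) mod int p) = \<beta> * \<psi> v"
    unfolding \<psi>_def \<beta>_def fst_conv snd_conv ofmod of_int_diff of_int_add using alg_mul2[OF ii] by simp
  have pw: "\<And>j. j < L \<Longrightarrow> \<phi> (cs!j) = \<alpha>^j * \<phi> (cs!0) \<and> \<psi> (cs!j) = \<beta>^j * \<psi> (cs!0)"
  proof -
    fix j show "j < L \<Longrightarrow> \<phi> (cs!j) = \<alpha>^j * \<phi> (cs!0) \<and> \<psi> (cs!j) = \<beta>^j * \<psi> (cs!0)"
    proof (induction j)
      case 0 then show ?case by simp
    next
      case (Suc j)
      then have jl: "j < L" by simp
      have "cs ! (Suc j) = cs ! ((j + 1) mod L)" using Suc.prems by simp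
      also have "\<dots> = ((fst (cs!j) - snd (cs!j)) mod int p, (fst (cs!j) + snd (cs!j)) mod int p)"
        using cyc(4)[OF jl] .
      finally have e: "cs ! (Suc j) = ((fst (cs!j) - snd (cs!j)) mod int p, (fst (cs!j) + snd (cs!j)) mod int p)" .
      show ?case using Suc.IH[OF jl] phistep[of "cs!j"] psistep[of "cs!j"] unfolding e
        by (simp add: mult.assoc)
    qed
  qed
  define z where "z = \<phi> (cs!0)"
  define w where "w = \<psi> (cs!0)"
  have closeL: "\<alpha>^L * z = z \<and> \<beta>^L * w = w"
  proof -
    have l1: "L - 1 < L" using L0 by simp
    have "cs ! 0 = cs ! ((L - 1 + 1) mod L)" using L0 by simp
    also have "\<dots> = ((fst (cs!(L-1)) - snd (cs!(L-1))) mod int p, (fst (cs!(L-1)) + snd (cs!(L-1))) mod int p)"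
      using cyc(4)[OF l1] .
    finally have e: "cs ! 0 = ((fst (cs!(L-1)) - snd (cs!(L-1))) mod int p, (fst (cs!(L-1)) + snd (cs!(L-1))) mod int p)" .
    have "\<phi> (cs!0) = \<alpha> * \<phi> (cs!(L-1))" by (subst e) (rule phistep)
    moreover have "\<psi> (cs!0) = \<beta> * \<psi> (cs!(L-1))" by (subst e) (rule psistep)
    ultimately have "\<phi> (cs!0) = \<alpha> * (\<alpha>^(L-1) * z) \<and> \<psi> (cs!0) = \<beta> * (\<beta>^(L-1) * w)"
      using pw[OF l1] unfolding z_def w_def by simp
    moreover have "\<alpha> * \<alpha>^(L-1) = \<alpha>^L" "\<beta> * \<beta>^(L-1) = \<beta>^L" using L0
      by (metis Suc_diff_1 power_Suc)+
    ultimately show ?thesis unfolding z_def[symmetric] w_def[symmetric] by (simp add: mult.assoc[symmetric])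
  qed
  have inj: "\<And>v u. v \<in> zn2_verts p \<Longrightarrow> u \<in> zn2_verts p \<Longrightarrow> \<phi> v = \<phi> u \<Longrightarrow> \<psi> v = \<psi> u \<Longrightarrow> v = u"
  proof -
    fix v u assume vV: "v \<in> zn2_verts p" and uV: "u \<in> zn2_verts p" and h1: "\<phi> v = \<phi> u" and h2: "\<psi> v = \<psi> u"
    obtain a b where v: "v = (a,b)" by force
    obtain c d where u: "u = (c,d)" by force
    define A where "A = (of_int a::'a)"
    define B where "B = (of_int b::'a)"
    define C where "C = (of_int c::'a)"
    define D where "D = (of_int d::'a)"
    have e1: "A + B*i = C + D*i" using h1 unfolding \<phi>_def v u A_def B_def C_def D_def by simp
    have e2: "A - B*i = C - D*i" using h2 unfolding \<psi>_def v u A_def B_def C_def D_def by simp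
    have "2 * A = 2 * C" using alg_inj[OF e1 e2] by simp
    then have AC: "A = C" using two by simp
    have "(2 * i) * B = (2 * i) * D" using alg_inj[OF e1 e2] by simp
    moreover have "2 * i \<noteq> 0" using two ii by auto
    ultimately have BD: "B = D" by simp
    have r: "0 \<le> a" "a < int p" "0 \<le> b" "b < int p" "0 \<le> c" "c < int p" "0 \<le> d" "d < int p"
      using vV uV unfolding v u zn2_verts_def by auto
    have "[a = c] (mod int p)" using AC ofinteq unfolding A_def C_def by blast
    moreover have "[b = d] (mod int p)" using BD ofinteq unfolding B_def D_def by blast
    ultimately
    have "a = c" "b = d" using r by (simp_all add: cong_def)
    then show "v = u" using v u by simp
  qed
  define Q where "Q = (\<lambda>n. \<alpha>^n * z = z \<and> \<beta>^n * w = w)"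
  have QL: "Q L" using closeL Q_def by simp
  have notQ: "\<And>j. 0 < j \<Longrightarrow> j < L \<Longrightarrow> \<not> Q j"
  proof
    fix j assume j: "0 < j" "j < L" and q: "Q j"
    have "\<phi> (cs!j) = \<phi> (cs!0)" "\<psi> (cs!j) = \<psi> (cs!0)" using pw[OF j(2)] q unfolding Q_def z_def w_def by auto
    moreover have "cs!j \<in> zn2_verts p" "cs!0 \<in> zn2_verts p" using cyc(3) j L0 L_def by auto
    ultimately have "cs!j = cs!0" using inj by blast
    then have "j = 0" using nth_eq_iff_index_eq[OF cyc(2), of j 0] j L0 L_def by simp
    then show False using j by simp
  qed
  have Qiff: "\<And>n. Q n \<longleftrightarrow> (z = 0 \<or> oa dvd n) \<and> (w = 0 \<or> ob dvd n)"
    unfolding Q_def mult_cancel_right2 oap(3) obp(3) by blast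
  have "L = 1 \<or> L = ob \<or> L = 4*t"
  proof (cases "z = 0")
    case True
    show ?thesis
    proof (cases "w = 0")
      case True
      have "Q 1" using Qiff \<open>z = 0\<close> True by simp
      then have "\<not> 1 < L" using notQ[of 1] zero_less_one by blast
      then show ?thesis using L0 by simp
    next
      case False
      have "L = ob" by (rule least_is[of Q]) (use Qiff \<open>z = 0\<close> False obp(1) QL L0 notQ in auto)
      then show ?thesis by simp
    qed
  next
    case False
    have "\<And>n. Q n \<longleftrightarrow> 4*t dvd n"
    proof -
      fix n
      have "ob dvd n" if "4*t dvd n" using that ob_dvd by (rule dvd_trans[rotated])
      then show "Q n \<longleftrightarrow> 4*t dvd n" using Qiff False oa4 by auto
    qed
    then have "L = 4*t" by (rule least_is[of Q]) (use tp(1) QL L0 notQ in auto)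
    then show ?thesis by simp
  qed
  then show ?thesis unfolding L_def ob_def \<beta>_def t_eq by blast
qed

end
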